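(* Let $P,P',Q,S$ be programs and $B$ a Boolean expression such that $P'\equiv_B(P,B)$ and $Q\equiv_B(P,\neg B)$. If the operational triple $\{|P'|\}\ S\ \{|P|\}$ holds, then $\{|P|\}\ \mathbf{while}\ (B)\ \mathbf{do}\ S\ \mathbf{elihw}\ \{|Q|\}$ holds.
   Context: Programs are statements of a sequential imperative language with a standard small-step operational semantics over program states. $\mathrm{behs}(P)$ is the set of pairs (initial state, final state) of finite terminating executions of $P$; $(s,u)\in\mathrm{behs}(P;Q)$ iff there is $t$ with $(s,t)\in\mathrm{behs}(P)$ and $(t,u)\in\mathrm{behs}(Q)$. For a state $s$ and Boolean expression $B$, $s(B)\in\{\mathit{tt},\mathit{ff}\}$ is the (side-effect-free) value of $B$ in $s$. The loop $\mathbf{while}\ (B)\ \mathbf{do}\ S\ \mathbf{elihw}$ started in state $s$ terminates in $s$ if $s(B)=\mathit{ff}$, and otherwise executes $S$ and then repeats the loop from the resulting state. The post-state set is $\mathrm{pst}(P)=\{t:\exists s,\ (s,t)\in\mathrm{behs}(P)\}$. The operational triple $\{|P|\}\ S\ \{|Q|\}$ means $\mathrm{pst}(P;S)\subseteq\mathrm{pst}(Q)$. For programs $P',P$ and Boolean expression $B$, $P'\equiv_B(P,B)$ means $\mathrm{pst}(P')=\mathrm{pst}(P)\cap\{s : s(B)=\mathit{tt}\}$. *)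

theory Defs
  imports Main
begin

type_synonym 's bexp = "'s \<Rightarrow> bool"

datatype 's com =
    Skip
  | Basic "'s \<Rightarrow> 's"
  | Seq "'s com" "'s com"
  | Cond "'s bexp" "'s com" "'s com"
  | While "'s bexp" "'s com"

inductive small_step :: "'s com \<times> 's \<Rightarrow> 's com \<times> 's \<Rightarrow> bool" where
  Basic: "small_step (Basic f, s) (Skip, f s)"
| Seq1: "small_step (Seq Skip c, s) (c, s)"
| Seq2: "small_step (c1, s) (c1', s') \<Longrightarrow> small_step (Seq c1 c2, s) (Seq c1' c2, s')"
| CondT: "b s \<Longrightarrow> small_step (Cond b c1 c2, s) (c1, s)"
| CondF: "\<not> b s \<Longrightarrow> small_step (Cond b c1 c2, s) (c2, s)"
| WhileT: "b s \<Longrightarrow> small_step (While b c, s) (Seq c (While b c), s)"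
| WhileF: "\<not> b s \<Longrightarrow> small_step (While b c, s) (Skip, s)"

definition behs :: "'s com \<Rightarrow> ('s \<times> 's) set" where
  "behs P = {(s, t). small_step\<^sup>*\<^sup>* (P, s) (Skip, t)}"

definition pst :: "'s com \<Rightarrow> 's set" where
  "pst P = {t. \<exists>s. (s, t) \<in> behs P}"

definition op_triple :: "'s com \<Rightarrow> 's com \<Rightarrow> 's com \<Rightarrow> bool" where
  "op_triple P S Q \<longleftrightarrow> pst (Seq P S) \<subseteq> pst Q"

definition equiv_B :: "'s com \<Rightarrow> 's com \<Rightarrow> 's bexp \<Rightarrow> bool" where
  "equiv_B P' P B \<longleftrightarrow> pst P' = pst P \<inter> {s. B s}"

end

theory Submission
  imports Defs
begin

lemma skip_nostep: "\<not> small_step (Skip, s) x"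
  by (auto elim: small_step.cases)

lemma seq_lift: "small_step\<^sup>*\<^sup>* a b \<Longrightarrow> a = (c1, s) \<Longrightarrow> b = (c1', s') \<Longrightarrow>
   small_step\<^sup>*\<^sup>* (Seq c1 c2, s) (Seq c1' c2, s')"
proof (induction arbitrary: c1' s' rule: rtranclp_induct)
  case base then show ?case by simp
next
  case (step y z)
  obtain c s'' where y: "y = (c, s'')" by (cases y)
  have "small_step\<^sup>*\<^sup>* (Seq c1 c2, s) (Seq c c2, s'')" using step y by simp
  moreover have "small_step (Seq c c2, s'') (Seq c1' c2, s')"
    using step(2) step(5) y by (simp add: small_step.Seq2)
  ultimately show ?case by simp
qed

lemma seq_comp: "small_step\<^sup>*\<^sup>* (c1, s) (Skip, t) \<Longrightarrow> small_step\<^sup>*\<^sup>* (c2, t) (Skip, u) \<Longrightarrow>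
   small_step\<^sup>*\<^sup>* (Seq c1 c2, s) (Skip, u)"
proof -
  assume a: "small_step\<^sup>*\<^sup>* (c1, s) (Skip, t)" and b: "small_step\<^sup>*\<^sup>* (c2, t) (Skip, u)"
  have "small_step\<^sup>*\<^sup>* (Seq c1 c2, s) (Seq Skip c2, t)" using seq_lift[OF a] by simp
  also have "small_step (Seq Skip c2, t) (c2, t)" by (rule small_step.Seq1)
  finally show ?thesis using b by simp
qed

lemma seq_decomp: "(small_step ^^ n) (Seq c1 c2, s) (Skip, u) \<Longrightarrow>
  \<exists>t m k. m + k < n \<and> (small_step ^^ m) (c1, s) (Skip, t) \<and> (small_step ^^ k) (c2, t) (Skip, u)"
proof (induction n arbitrary: c1 s)
  case 0 then show ?case by simp
next
  case (Suc n)
  then obtain y where y1: "small_step (Seq c1 c2, s) y" and y2: "(small_step ^^ n) y (Skip, u)"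
    using relpowp_Suc_D2 by metis
  from y1 show ?case
  proof (cases rule: small_step.cases)
    case Seq1
    then show ?thesis using y2 by (intro exI[of _ s] exI[of _ 0] exI[of _ n]) auto
  next
    case (Seq2 c1' s')
    then obtain t m k where "m + k < n" "(small_step ^^ m) (c1', s') (Skip, t)"
       "(small_step ^^ k) (c2, t) (Skip, u)" using Suc.IH y2 by blast
    moreover have "(small_step ^^ Suc m) (c1, s) (Skip, t)"
      using Seq2 calculation(2) by (meson relpowp_Suc_I2)
    ultimately show ?thesis by (intro exI[of _ t] exI[of _ "Suc m"] exI[of _ k]) auto
  qed
qed

lemma seq_decomp': "small_step\<^sup>*\<^sup>* (Seq c1 c2, s) (Skip, u) \<Longrightarrow>
  \<exists>t. small_step\<^sup>*\<^sup>* (c1, s) (Skip, t) \<and> small_step\<^sup>*\<^sup>* (c2, t) (Skip, u)"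
proof -
  assume "small_step\<^sup>*\<^sup>* (Seq c1 c2, s) (Skip, u)"
  then obtain n where "(small_step ^^ n) (Seq c1 c2, s) (Skip, u)"
    using rtranclp_imp_relpowp by fast
  then obtain t m k where "(small_step ^^ m) (c1, s) (Skip, t)" "(small_step ^^ k) (c2, t) (Skip, u)"
    using seq_decomp by (metis (no_types))
  then show ?thesis using relpowp_imp_rtranclp by fast
qed

lemma skip_pow: "(small_step ^^ n) (Skip, t) (Skip, u) \<Longrightarrow> u = t"
proof (cases n)
  case 0 then show "(small_step ^^ n) (Skip, t) (Skip, u) \<Longrightarrow> u = t" by simp
next
  case (Suc m)
  assume "(small_step ^^ n) (Skip, t) (Skip, u)"
  then obtain y where "small_step (Skip, t) y" using Suc relpowp_Suc_D2 by metis
  then show ?thesis using skip_nostep by (metis (no_types))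
qed

lemma while_inv:
  assumes step: "\<And>t u. t \<in> I \<Longrightarrow> B t \<Longrightarrow> small_step\<^sup>*\<^sup>* (S, t) (Skip, u) \<Longrightarrow> u \<in> I"
  shows "(small_step ^^ n) (While B S, t) (Skip, u) \<Longrightarrow> t \<in> I \<Longrightarrow> u \<in> I \<and> \<not> B u"
proof (induction n arbitrary: t rule: less_induct)
  case (less n)
  then obtain n' where n: "n = Suc n'"
    by (cases n) auto
  then obtain y where y1: "small_step (While B S, t) y" and y2: "(small_step ^^ n') y (Skip, u)"
    using less.prems relpowp_Suc_D2 by metis
  from y1 show ?case
  proof (cases rule: small_step.cases)
    case WhileT
    have "(small_step ^^ n') (Seq S (While B S), t) (Skip, u)" using y2 WhileT by simp
    from seq_decomp[OF this] obtain t' m k where mk: "m + k < n'" "(small_step ^^ m) (S, t) (Skip, t')"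
       "(small_step ^^ k) (While B S, t') (Skip, u)" by auto
    have "t' \<in> I" using step[OF less.prems(2) WhileT(2)] mk(2)
      using relpowp_imp_rtranclp by fast
    then show ?thesis using less.IH[of k t'] mk n by simp
  next
    case WhileF
    then have "u = t" using y2
      using skip_pow by simp
    then show ?thesis using WhileF less.prems by simp
  qed
qed

theorem theorem1:
  fixes P P' Q S :: "'s com" and B :: "'s bexp"
  assumes "equiv_B P' P B"
    and "equiv_B Q P (\<lambda>s. \<not> B s)"
    and "op_triple P' S P"
  shows "op_triple P (While B S) Q"
proof -
  have inv: "u \<in> pst P" if "t \<in> pst P" "B t" "small_step\<^sup>*\<^sup>* (S, t) (Skip, u)" for t u
  proof -
    have "t \<in> pst P'" using assms(1) that unfolding equiv_B_def by auto
    then obtain s where "small_step\<^sup>*\<^sup>* (P', s) (Skip, t)" unfolding pst_def behs_def by auto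
    then have "small_step\<^sup>*\<^sup>* (Seq P' S, s) (Skip, u)" by (rule seq_comp[OF _ that(3)])
    then have "u \<in> pst (Seq P' S)" unfolding pst_def behs_def by auto
    then show ?thesis using assms(3) unfolding op_triple_def by auto
  qed
  show ?thesis unfolding op_triple_def
  proof
    fix u assume "u \<in> pst (Seq P (While B S))"
    then obtain s where s: "small_step\<^sup>*\<^sup>* (Seq P (While B S), s) (Skip, u)"
      unfolding pst_def behs_def by auto
    then obtain t where t1: "small_step\<^sup>*\<^sup>* (P, s) (Skip, t)"
      and t2: "small_step\<^sup>*\<^sup>* (While B S, t) (Skip, u)" using seq_decomp'[OF s] by blast
    have "t \<in> pst P" using t1 unfolding pst_def behs_def by auto
    moreover obtain n where "(small_step ^^ n) (While B S, t) (Skip, u)"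
      using rtranclp_imp_relpowp[OF t2] by blast
    ultimately have "u \<in> pst P \<and> \<not> B u" by (intro while_inv[of "pst P" B S, OF inv])
    then show "u \<in> pst Q" using assms(2) unfolding equiv_B_def by auto
  qed
qed

end
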